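(* Let $\lambda\in\mathbb C$ with $\lambda\ne1$ and $\Re(\lambda)>0$, and let $Z$ be a complex random variable with $\mathbb E|Z|<\infty$, $\mathbb EZ\ne0$ and $Z\overset{\mathcal L}{=}e^{-\lambda T}(Z^{(1)}+\dots+Z^{(m)})$, where $Z^{(1)},\dots,Z^{(m)}$ are independent copies of $Z$ independent of $T$. Then for every $z\in\mathbb C$: if $z\in\mathrm{Supp}(Z)$ then the open disc $D(0,|z|)$ of centre $0$ and radius $|z|$ is contained in $\mathrm{Supp}(Z)$.
   Context: $m\ge2$ is an integer. $T=\tau_{(1)}+\dots+\tau_{(m-1)}$ where the $\tau_{(j)}$ are independent and $\tau_{(j)}$ is exponential with parameter $j$. $\mathrm{Supp}(Z)$ is the support of the law of $Z$: $z\in\mathrm{Supp}(Z)$ iff $\mathbb P(|Z-z|\le\varepsilon)>0$ for all $\varepsilon>0$. *)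

theory Defs
  imports "HOL-Probability.Probability"
begin

definition T_law :: "nat \<Rightarrow> real measure" where
  "T_law m = distr (PiM {1..<m} (\<lambda>j. density lborel (exponential_density (real j))))
                   borel (\<lambda>x. \<Sum>j\<in>{1..<m}. x j)"

definition supp_law :: "complex measure \<Rightarrow> complex set" where
  "supp_law \<mu> = {z. \<forall>\<epsilon>>0. measure \<mu> (cball z \<epsilon>) > 0}"

end

theory Submission
  imports Defs
begin


abbreviation D :: "nat \<Rightarrow> real measure" where
  "D \<equiv> (\<lambda>j. density lborel (exponential_density (real j)))"

lemma sf_D: "sigma_finite_measure (D j)"
  by (subst sigma_finite_measure.sigma_finite_iff_density_finite') (auto intro: lborel.sigma_finite_measure_axioms)

lemma psf_D: "product_sigma_finite D"
  unfolding product_sigma_finite_def using sf_D by auto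

lemma prob_D: "j \<ge> 1 \<Longrightarrow> prob_space (D j)"
  by (rule prob_space_exponential_density) simp

lemma prob_T: "prob_space (T_law m)"
  unfolding T_law_def
  by (rule prob_space.prob_space_distr) (auto intro!: prob_space_PiM prob_D)

lemma sets_T[measurable_cong]: "sets (T_law m) = sets borel"
  unfolding T_law_def by simp

lemma space_T[simp]: "space (T_law m) = UNIV"
  unfolding T_law_def by simp

lemma D_interval_pos:
  assumes j: "j \<ge> 1" and ab: "a < b" and b: "0 < b"
  shows "emeasure (D j) {a<..b} > 0"
proof -
  interpret prob_space "D j" using prob_D[OF j] .
  have "{a<..b} = {..b} - {..a}" by auto
  then have "emeasure (D j) {a<..b} = emeasure (D j) {..b} - emeasure (D j) {..a}"
    using ab by (simp add: emeasure_Diff)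
  also have "\<dots> = ennreal (erlang_CDF 0 (real j) b) - ennreal (erlang_CDF 0 (real j) a)"
    using j by (simp add: emeasure_erlang_density)
  also have "\<dots> = ennreal (erlang_CDF 0 (real j) b - erlang_CDF 0 (real j) a)"
    using j by (subst ennreal_minus) auto
  also have "\<dots> > 0"
  proof -
    have "erlang_CDF 0 (real j) b - erlang_CDF 0 (real j) a > 0"
      using j ab b by (auto simp: erlang_CDF_0 mult_pos_pos)
    then show ?thesis by simp
  qed
  finally show ?thesis .
qed

lemma T_ball_pos:
  assumes m: "m \<ge> 2" and t: "t > 0" and d: "\<delta> > 0"
  shows "emeasure (T_law m) (ball t \<delta>) > 0"
proof -
  define I where "I = {1..<m}"
  define k where "k = real (m - 1)"
  have cardI: "card I = m - 1" unfolding I_def by simp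
  have k: "k \<ge> 1" using m unfolding k_def by simp
  interpret product_sigma_finite D by (rule psf_D)
  have fin: "finite I" unfolding I_def by simp
  define a where "a = t / k - \<delta> / (2*k)"
  define b where "b = t / k"
  have ab: "a < b" "0 < b" using k t d unfolding a_def b_def by (auto simp: field_simps)
  have meas: "(\<lambda>x. \<Sum>j\<in>I. x j) \<in> borel_measurable (PiM I D)" by measurable
  have sub: "PiE I (\<lambda>_. {a<..b}) \<subseteq> (\<lambda>x. \<Sum>j\<in>I. x j) -` ball t \<delta> \<inter> space (PiM I D)"
  proof
    fix x assume x: "x \<in> PiE I (\<lambda>_. {a<..b})"
    have "\<bar>(\<Sum>j\<in>I. x j) - t\<bar> = \<bar>\<Sum>j\<in>I. (x j - b)\<bar>"
      using k unfolding b_def by (simp add: sum_subtractf cardI k_def)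
    also have "\<dots> \<le> (\<Sum>j\<in>I. \<bar>x j - b\<bar>)" by (rule sum_abs)
    also have "\<dots> \<le> (\<Sum>j\<in>I. \<delta> / (2*k))"
      using x by (intro sum_mono) (auto simp: a_def b_def PiE_def Pi_def)
    also have "\<dots> = \<delta> / 2" using k m by (simp add: cardI k_def of_nat_diff field_simps)
    also have "\<dots> < \<delta>" using d by simp
    finally show "x \<in> (\<lambda>x. \<Sum>j\<in>I. x j) -` ball t \<delta> \<inter> space (PiM I D)"
      using x by (auto simp: space_PiM dist_real_def PiE_def Pi_def abs_minus_commute)
  qed
  have e1: "emeasure (T_law m) (ball t \<delta>) = emeasure (PiM I D) ((\<lambda>x. \<Sum>j\<in>I. x j) -` ball t \<delta> \<inter> space (PiM I D))"
    unfolding T_law_def I_def[symmetric] by (rule emeasure_distr[OF meas]) simp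
  have e2: "emeasure (PiM I D) ((\<lambda>x. \<Sum>j\<in>I. x j) -` ball t \<delta> \<inter> space (PiM I D)) \<ge> emeasure (PiM I D) (PiE I (\<lambda>_. {a<..b}))"
    by (rule emeasure_mono[OF sub]) (use meas in measurable)
  have e3: "emeasure (PiM I D) (PiE I (\<lambda>_. {a<..b})) = (\<Prod>j\<in>I. emeasure (D j) {a<..b})"
    by (rule emeasure_PiM[OF fin]) simp
  have e4: "(\<Prod>j\<in>I. emeasure (D j) {a<..b}) > 0"
  proof -
    have "\<forall>j\<in>I. emeasure (D j) {a<..b} \<noteq> 0"
      using ab D_interval_pos unfolding I_def by (metis atLeastLessThan_iff not_less_iff_gr_or_eq)
    then show ?thesis using fin by (simp add: zero_less_iff_neq_zero prod_zero_iff)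
  qed
  show ?thesis using e1 e2 e3 e4 by (metis order.strict_trans2)
qed



lemma supp_closed:
  assumes "finite_measure M" "sets M = sets borel"
  shows "closed (supp_law M)"
proof -
  interpret finite_measure M by fact
  have "closure (supp_law M) \<subseteq> supp_law M"
  proof
    fix x assume x: "x \<in> closure (supp_law M)"
    show "x \<in> supp_law M" unfolding supp_law_def
    proof (intro CollectI allI impI)
      fix e :: real assume e: "e > 0"
      obtain y where y: "y \<in> supp_law M" "dist y x < e/2"
        using x e closure_approachable[of x "supp_law M"] by (meson half_gt_zero)
      have "measure M (cball y (e/2)) > 0" using y e unfolding supp_law_def by auto
      also have "measure M (cball y (e/2)) \<le> measure M (cball x e)"
      proof (rule finite_measure_mono)
        show "cball y (e/2) \<subseteq> cball x e" using y
          by (auto simp: cball_def) (smt (verit) dist_commute dist_triangle)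
        show "cball x e \<in> sets M" using assms(2) by simp
      qed
      finally show "measure M (cball x e) > 0" .
    qed
  qed
  then show ?thesis by (simp add: closure_subset_eq)
qed

lemma aux_le: "0 \<le> (x::real) \<Longrightarrow> 0 < e \<Longrightarrow> e / (2*(x+1)) * x \<le> e/2"
  by (simp add: field_simps)

lemma supp_step:
  fixes lam :: complex and \<mu> :: "complex measure"
  assumes m: "m \<ge> 2" and lampos: "Re lam > 0" and prob: "prob_space \<mu>" and sets: "sets \<mu> = sets borel"
  and fixpt: "\<mu> = distr (T_law m \<Otimes>\<^sub>M PiM {..<m} (\<lambda>_. \<mu>)) borel
                     (\<lambda>(t, zs). exp (- lam * complex_of_real t) * (\<Sum>i<m. zs i))"
  and t: "t > 0" and s: "\<forall>i<m. s i \<in> supp_law \<mu>"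
  shows "exp (- lam * complex_of_real t) * (\<Sum>i<m. s i) \<in> supp_law \<mu>"
proof -
  note sets[measurable_cong]
  define E where "E = (\<lambda>t::real. exp (- lam * complex_of_real t))"
  define c where "c = (\<Sum>i<m. s i)"
  define F where "F = (\<lambda>(t::real, zs::nat \<Rightarrow> complex). exp (- lam * complex_of_real t) * (\<Sum>i<m. zs i))"
  define P where "P = PiM {..<m} (\<lambda>_. \<mu>)"
  interpret mu: prob_space \<mu> by fact
  interpret T: prob_space "T_law m" by (rule prob_T)
  interpret P: prob_space P unfolding P_def by (rule prob_space_PiM) (use prob in auto)
  interpret TP: pair_sigma_finite "T_law m" P ..
  interpret TPp: prob_space "T_law m \<Otimes>\<^sub>M P" by (rule prob_space_pair) unfold_locales
  have Fm: "F \<in> borel_measurable (T_law m \<Otimes>\<^sub>M P)" unfolding F_def P_def by measurable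
  have spmu: "space \<mu> = UNIV" using sets_eq_imp_space_eq[OF sets] by simp
  show ?thesis unfolding supp_law_def
  proof (intro CollectI allI impI)
    fix e :: real assume e: "e > 0"
    have ep: "e / (2 * (cmod c + 1)) > 0"
      by (rule divide_pos_pos[OF e]) (smt (verit) norm_ge_zero)
    have "continuous (at t) E" unfolding E_def by (intro continuous_intros)
    then obtain d1 where d1: "d1 > 0" "\<And>t'. dist t' t < d1 \<Longrightarrow> dist (E t') (E t) < e / (2 * (cmod c + 1))"
    proof -
      have "e / (2 * (cmod c + 1)) > 0" proof (rule divide_pos_pos)
        show "0 < e" by (rule e)
        show "0 < 2 * (cmod c + 1)" by (smt (verit) norm_ge_zero)
      qed
      then show ?thesis using that \<open>continuous (at t) E\<close> unfolding continuous_at_eps_delta by blast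
    qed
    define d where "d = min d1 t"
    define r where "r = e / (2 * (real m + 1))"
    have d: "d > 0" using d1 t unfolding d_def by simp
    have r: "r > 0" using e unfolding r_def by simp
    define B where "B = ball t d \<times> PiE {..<m} (\<lambda>i. cball (s i) r)"
    have sub: "B \<subseteq> F -` cball (E t * c) e \<inter> space (T_law m \<Otimes>\<^sub>M P)"
    proof
      fix x assume "x \<in> B"
      then obtain t' zs where x: "x = (t', zs)" "t' \<in> ball t d" "zs \<in> PiE {..<m} (\<lambda>i. cball (s i) r)"
        unfolding B_def by auto
      have t'pos: "t' > 0" using x(2) unfolding d_def by (auto simp: dist_real_def)
      have nE: "cmod (E t') \<le> 1" unfolding E_def using t'pos lampos
        by (simp add: norm_exp_eq_Re)
      have dE: "cmod (E t' - E t) \<le> e / (2 * (cmod c + 1))"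
        using d1(2)[of t'] x(2) unfolding d_def by (auto simp: dist_real_def dist_norm abs_minus_commute less_imp_le)
      have "cmod ((\<Sum>i<m. zs i) - c) \<le> (\<Sum>i<m. cmod (zs i - s i))"
        unfolding c_def sum_subtractf[symmetric] by (rule norm_sum)
      also have "\<dots> \<le> (\<Sum>i<m. r)"
        using x(3) by (intro sum_mono) (auto simp: PiE_def Pi_def dist_norm norm_minus_commute)
      also have "\<dots> = real m * r" by simp
      also have "\<dots> \<le> e / 2" using e unfolding r_def by (simp add: field_simps)
      finally have dS: "cmod ((\<Sum>i<m. zs i) - c) \<le> e / 2" .
      have "E t' * (\<Sum>i<m. zs i) - E t * c = E t' * ((\<Sum>i<m. zs i) - c) + (E t' - E t) * c"
        by (simp add: algebra_simps)
      then have "cmod (E t' * (\<Sum>i<m. zs i) - E t * c) \<le> cmod (E t') * cmod ((\<Sum>i<m. zs i) - c) + cmod (E t' - E t) * cmod c"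
        by (metis norm_mult norm_triangle_ineq)
      also have "\<dots> \<le> 1 * (e/2) + e / (2 * (cmod c + 1)) * cmod c"
        using ep by (intro add_mono mult_mono nE dS dE) auto
      also have "\<dots> \<le> e"
      proof -
        have "e / (2 * (cmod c + 1)) * cmod c \<le> e / 2"
          using e by (intro aux_le) auto
        then show ?thesis by linarith
      qed
      finally have "dist (E t * c) (F x) \<le> e"
        unfolding F_def x(1) E_def by (simp add: dist_norm norm_minus_commute)
      moreover have "x \<in> space (T_law m \<Otimes>\<^sub>M P)"
        using x by (simp add: space_pair_measure P_def space_PiM spmu PiE_def Pi_def)
      ultimately show "x \<in> F -` cball (E t * c) e \<inter> space (T_law m \<Otimes>\<^sub>M P)" by simp
    qed
    have e1: "emeasure \<mu> (cball (E t * c) e) = emeasure (T_law m \<Otimes>\<^sub>M P) (F -` cball (E t * c) e \<inter> space (T_law m \<Otimes>\<^sub>M P))"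
    proof -
      have fx: "\<mu> = distr (T_law m \<Otimes>\<^sub>M P) borel F" unfolding F_def P_def by (rule fixpt)
      show ?thesis by (subst fx) (rule emeasure_distr[OF Fm], simp)
    qed
    have e2: "emeasure (T_law m \<Otimes>\<^sub>M P) (F -` cball (E t * c) e \<inter> space (T_law m \<Otimes>\<^sub>M P)) \<ge> emeasure (T_law m \<Otimes>\<^sub>M P) B"
      by (rule emeasure_mono[OF sub]) (use Fm in measurable)
    have e3: "emeasure (T_law m \<Otimes>\<^sub>M P) B = emeasure (T_law m) (ball t d) * emeasure P (PiE {..<m} (\<lambda>i. cball (s i) r))"
      unfolding B_def by (rule P.emeasure_pair_measure_Times) (auto simp: P_def sets intro!: sets_PiM_I_finite)
    have e4: "emeasure P (PiE {..<m} (\<lambda>i. cball (s i) r)) = (\<Prod>i<m. emeasure \<mu> (cball (s i) r))"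
    proof -
      interpret product_sigma_finite "\<lambda>_. \<mu>"
        unfolding product_sigma_finite_def using mu.sigma_finite_measure_axioms by simp
      show ?thesis unfolding P_def by (rule emeasure_PiM) (auto simp: sets)
    qed
    have e5: "emeasure (T_law m) (ball t d) > 0" by (rule T_ball_pos[OF m t d])
    have e6: "(\<Prod>i<m. emeasure \<mu> (cball (s i) r)) > 0"
    proof -
      have "\<forall>i<m. emeasure \<mu> (cball (s i) r) \<noteq> 0"
        using s r unfolding supp_law_def by (auto simp: mu.emeasure_eq_measure) (metis less_irrefl)
      then show ?thesis by (simp add: zero_less_iff_neq_zero prod_zero_iff)
    qed
    have "emeasure \<mu> (cball (E t * c) e) > 0"
      using e1 e2 e3 e4 e5 e6 by (metis order.strict_trans2 mult_pos_pos ennreal_zero_less_mult_iff)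
    then show "measure \<mu> (cball (exp (- lam * complex_of_real t) * (\<Sum>i<m. s i)) e) > 0"
      unfolding E_def c_def by (simp add: mu.emeasure_eq_measure)
  qed
qed



lemma ed_int:
  assumes l: "l > 0"
  shows "integrable lborel (exponential_density l)" "integral\<^sup>L lborel (exponential_density l) = 1"
proof -
  interpret prob_space "density lborel (exponential_density l)" by (rule prob_space_exponential_density[OF l])
  have i1: "integrable (density lborel (exponential_density l)) (\<lambda>_. 1::real)" by simp
  have AE: "AE x in lborel. 0 \<le> exponential_density l x" using l by (simp add: exponential_density_nonneg)
  show "integrable lborel (exponential_density l)"
    using i1 by (subst (asm) integrable_density) (use AE in auto)
  have "integral\<^sup>L (density lborel (exponential_density l)) (\<lambda>_. 1::real) = 1" using prob_space by simp
  then show "integral\<^sup>L lborel (exponential_density l) = 1"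
    by (subst (asm) integral_density) (use AE in auto)
qed

lemma D_exp:
  assumes j: "j \<ge> 1" and l: "l > 0"
  shows "integrable (D j) (\<lambda>x. exp (- l * x))" "integral\<^sup>L (D j) (\<lambda>x. exp (- l * x)) = real j / (real j + l)"
proof -
  have eq: "\<And>x. exponential_density (real j) x *\<^sub>R exp (- l * x) = (real j / (real j + l)) * exponential_density (real j + l) x"
  proof -
    fix x :: real
    have "real j + l > 0" using j l by simp
    then show "exponential_density (real j) x *\<^sub>R exp (- l * x) = (real j / (real j + l)) * exponential_density (real j + l) x"
      by (simp add: exponential_density_def field_simps flip: exp_add)
  qed
  have pos: "real j + l > 0" using j l by simp
  have AE: "AE x in lborel. 0 \<le> exponential_density (real j) x" using j by (simp add: exponential_density_nonneg)
  have eq2: "(\<lambda>x. exponential_density (real j) x *\<^sub>R exp (- l * x)) = (\<lambda>x. (real j / (real j + l)) * exponential_density (real j + l) x)"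
    by (rule ext, rule eq)
  have "integrable lborel (\<lambda>x. (real j / (real j + l)) * exponential_density (real j + l) x)"
    using ed_int(1)[OF pos] by simp
  then show "integrable (D j) (\<lambda>x. exp (- l * x))"
    by (subst integrable_density) (use AE eq2 in auto)
  have "integral\<^sup>L lborel (\<lambda>x. (real j / (real j + l)) * exponential_density (real j + l) x) = real j / (real j + l)"
    using ed_int(2)[OF pos] by simp
  then show "integral\<^sup>L (D j) (\<lambda>x. exp (- l * x)) = real j / (real j + l)"
    by (subst integral_density) (use AE eq2 in auto)
qed



lemma T_exp:
  assumes l: "l > 0"
  shows "integral\<^sup>L (T_law m) (\<lambda>t. exp (- l * t)) = (\<Prod>j\<in>{1..<m}. real j / (real j + l))"
proof -
  interpret product_sigma_finite D by (rule psf_D)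
  have "integral\<^sup>L (T_law m) (\<lambda>t. exp (- l * t)) = integral\<^sup>L (PiM {1..<m} D) (\<lambda>x. exp (- l * (\<Sum>j\<in>{1..<m}. x j)))"
    unfolding T_law_def by (rule integral_distr) measurable
  also have "\<dots> = integral\<^sup>L (PiM {1..<m} D) (\<lambda>x. \<Prod>j\<in>{1..<m}. exp (- l * x j))"
    by (simp add: sum_distrib_left exp_sum)
  also have "\<dots> = (\<Prod>j\<in>{1..<m}. integral\<^sup>L (D j) (\<lambda>x. exp (- l * x)))"
    by (rule product_integral_prod) (use D_exp(1) l in auto)
  also have "\<dots> = (\<Prod>j\<in>{1..<m}. real j / (real j + l))"
    by (rule prod.cong) (use D_exp(2) l in auto)
  finally show ?thesis .
qed

lemma prod_lt1:
  fixes f :: "'a \<Rightarrow> real"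
  shows "finite A \<Longrightarrow> A \<noteq> {} \<Longrightarrow> (\<forall>x\<in>A. 0 \<le> f x \<and> f x < 1) \<Longrightarrow> prod f A < 1"
proof (induction A rule: finite_ne_induct)
  case (singleton x) then show ?case by simp
next
  case (insert x F)
  then have a: "0 \<le> f x" "f x < 1" "prod f F < 1" "0 \<le> prod f F" by (auto intro: prod_nonneg)
  then have "f x * prod f F \<le> f x" by (simp add: mult_left_le)
  then show ?case using insert a by simp
qed

lemma prod_gt1:
  fixes f :: "'a \<Rightarrow> real"
  shows "finite A \<Longrightarrow> A \<noteq> {} \<Longrightarrow> (\<forall>x\<in>A. f x > 1) \<Longrightarrow> prod f A > 1"
proof (induction A rule: finite_ne_induct)
  case (singleton x) then show ?case by simp
next
  case (insert x F)
  then show ?case by (simp add: less_1_mult)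
qed

lemma telesc: "n \<ge> 1 \<Longrightarrow> (\<Prod>j\<in>{1..<n}. (real j + 1) / real j) = real n"
proof (induction n)
  case 0 then show ?case by simp
next
  case (Suc n)
  show ?case
  proof (cases "n = 0")
    case True then show ?thesis by simp
  next
    case False
    then have "{1..<Suc n} = insert n {1..<n}" by auto
    then have "(\<Prod>j\<in>{1..<Suc n}. (real j + 1) / real j) = (real n + 1) / real n * (\<Prod>j\<in>{1..<n}. (real j + 1) / real j)"
      by simp
    also have "\<dots> = real (Suc n)" using Suc False by simp
    finally show ?thesis .
  qed
qed

lemma prod_ne:
  assumes n: "n \<ge> 2" and l: "l > 0" "l \<noteq> 1"
  shows "(\<Prod>j\<in>{1..<n}. real j / (real j + l)) * real n \<noteq> 1"
proof -
  have "(\<Prod>j\<in>{1..<n}. real j / (real j + l)) * real n =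
        (\<Prod>j\<in>{1..<n}. real j / (real j + l)) * (\<Prod>j\<in>{1..<n}. (real j + 1) / real j)"
    using telesc[of n] n by simp
  also have "\<dots> = (\<Prod>j\<in>{1..<n}. (real j + 1) / (real j + l))"
    by (subst prod.distrib[symmetric], rule prod.cong) auto
  finally have eq: "(\<Prod>j\<in>{1..<n}. real j / (real j + l)) * real n = (\<Prod>j\<in>{1..<n}. (real j + 1) / (real j + l))" .
  have ne: "{1..<n} \<noteq> {}" using n by auto
  show ?thesis
  proof (cases "l > 1")
    case True
    have "(\<Prod>j\<in>{1..<n}. (real j + 1) / (real j + l)) < 1"
      by (rule prod_lt1[OF _ ne]) (use True in auto)
    then show ?thesis using eq by simp
  next
    case False
    then have "l < 1" using l by simp
    have "(\<Prod>j\<in>{1..<n}. (real j + 1) / (real j + l)) > 1"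
      by (rule prod_gt1[OF _ ne]) (use \<open>l < 1\<close> l in auto)
    then show ?thesis using eq by simp
  qed
qed



lemma mean_eq:
  fixes lam :: complex and \<mu> :: "complex measure"
  assumes m: "m \<ge> 2" and prob: "prob_space \<mu>" and sets: "sets \<mu> = sets borel"
    and integ: "integrable \<mu> (\<lambda>x. x)"
    and mean: "(\<integral>x. x \<partial>\<mu>) \<noteq> 0"
    and fixpt: "\<mu> = distr (T_law m \<Otimes>\<^sub>M PiM {..<m} (\<lambda>_. \<mu>)) borel
                     (\<lambda>(t, zs). exp (- lam * complex_of_real t) * (\<Sum>i<m. zs i))"
  shows "(\<integral>t. exp (- lam * complex_of_real t) \<partial>T_law m) * of_nat m = 1"
proof -
  note sets[measurable_cong]
  define F where "F = (\<lambda>(t::real, zs::nat \<Rightarrow> complex). exp (- lam * complex_of_real t) * (\<Sum>i<m. zs i))"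
  define P where "P = PiM {..<m} (\<lambda>_. \<mu>)"
  define EZ where "EZ = (\<integral>x. x \<partial>\<mu>)"
  interpret mu: prob_space \<mu> by fact
  interpret T: prob_space "T_law m" by (rule prob_T)
  interpret P: prob_space P unfolding P_def by (rule prob_space_PiM) (use prob in auto)
  interpret TP: pair_sigma_finite "T_law m" P ..
  interpret psf: product_sigma_finite "\<lambda>_. \<mu>"
    unfolding product_sigma_finite_def using mu.sigma_finite_measure_axioms by simp
  have Fm: "F \<in> borel_measurable (T_law m \<Otimes>\<^sub>M P)" unfolding F_def P_def by measurable
  have fx: "\<mu> = distr (T_law m \<Otimes>\<^sub>M P) borel F" unfolding F_def P_def by (rule fixpt)
  have intF: "integrable (T_law m \<Otimes>\<^sub>M P) F"
  proof -
    have "integrable (distr (T_law m \<Otimes>\<^sub>M P) borel F) (\<lambda>x. x)" using integ fx by simp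
    then show ?thesis by (subst (asm) integrable_distr_eq[OF Fm]) auto
  qed
  have coord: "integral\<^sup>L P (\<lambda>zs. zs i) = EZ" "integrable P (\<lambda>zs. zs i)" if i: "i < m" for i
  proof -
    define f where "f = (\<lambda>j (x::complex). if j = i then x else 1)"
    have fint: "integrable \<mu> (f j)" for j by (cases "j = i") (auto simp: f_def integ)
    have prodf: "(\<lambda>zs. \<Prod>j<m. f j (zs j)) = (\<lambda>zs. zs i)"
      using i by (auto simp: f_def prod.delta)
    have "integrable P (\<lambda>zs. \<Prod>j<m. f j (zs j))" unfolding P_def
      by (rule psf.product_integrable_prod) (use fint in auto)
    then show "integrable P (\<lambda>zs. zs i)" using prodf by simp
    have "integral\<^sup>L P (\<lambda>zs. \<Prod>j<m. f j (zs j)) = (\<Prod>j<m. integral\<^sup>L \<mu> (f j))" unfolding P_def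
      by (rule psf.product_integral_prod) (use fint in auto)
    also have "\<dots> = (\<Prod>j<m. if j = i then EZ else 1)"
      by (rule prod.cong) (auto simp: f_def EZ_def mu.prob_space)
    also have "\<dots> = EZ" using i by (simp add: prod.delta)
    finally show "integral\<^sup>L P (\<lambda>zs. zs i) = EZ" using prodf by simp
  qed
  have sumint: "integral\<^sup>L P (\<lambda>zs. \<Sum>i<m. zs i) = of_nat m * EZ"
    using Bochner_Integration.integral_sum[where I="{..<m}" and M=P and f="\<lambda>i zs. zs i"] coord by simp
  have "EZ = integral\<^sup>L (T_law m \<Otimes>\<^sub>M P) F"
    unfolding EZ_def by (subst fx) (rule integral_distr[OF Fm], simp)
  also have "\<dots> = (\<integral>t. (\<integral>zs. exp (- lam * complex_of_real t) * (\<Sum>i<m. zs i) \<partial>P) \<partial>T_law m)"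
    using TP.integral_fst[of "\<lambda>t zs. exp (- lam * complex_of_real t) * (\<Sum>i<m. zs i)"] intF
    unfolding F_def by simp
  also have "\<dots> = (\<integral>t. exp (- lam * complex_of_real t) * (of_nat m * EZ) \<partial>T_law m)"
    by (simp add: sumint)
  also have "\<dots> = (\<integral>t. exp (- lam * complex_of_real t) \<partial>T_law m) * (of_nat m * EZ)"
    by simp
  finally have "EZ = (\<integral>t. exp (- lam * complex_of_real t) \<partial>T_law m) * of_nat m * EZ"
    by (simp add: mult.assoc)
  then show ?thesis using mean unfolding EZ_def[symmetric] by simp
qed



lemma geo:
  fixes S :: "complex set" and lam z w :: complex
  assumes cl: "closed S" and z0: "0 \<in> S" and add: "\<And>x y. x \<in> S \<Longrightarrow> y \<in> S \<Longrightarrow> x + y \<in> S"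
    and spiral: "\<And>t. t > 0 \<Longrightarrow> exp (- lam * complex_of_real t) * z \<in> S"
    and a: "Re lam > 0" and b: "Im lam \<noteq> 0" and z: "z \<noteq> 0"
  shows "w \<in> S"
proof (cases "w = 0")
  case True then show ?thesis using z0 by simp
next
  case w: False
  have mult: "of_nat n * p \<in> S" if "p \<in> S" for n p
    by (induction n) (use z0 that add in \<open>auto simp: distrib_right\<close>)
  have "w \<in> closure S"
    unfolding closure_approachable
  proof (intro allI impI)
    fix e :: real assume e: "e > 0"
    define u where "u = sgn w / sgn z"
    have u0: "u \<noteq> 0" using w z unfolding u_def by (simp add: sgn_zero_iff)
    have nu: "cmod u = 1" using w z unfolding u_def by (simp add: norm_divide norm_sgn)
    define \<theta> where "\<theta> = Arg u"
    have cth: "cis \<theta> = u" unfolding \<theta>_def using cis_Arg[OF u0] nu by (simp add: sgn_eq)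
    define T0 where "T0 = max 0 (ln (cmod z / e) / Re lam)"
    obtain N :: nat where N: "(T0 * \<bar>Im lam\<bar> + \<bar>\<theta>\<bar>) / (2*pi) < real N"
      using reals_Archimedean2 by blast
    define k where "k = (if Im lam > 0 then real N else - real N)"
    define t where "t = (2*pi*k - \<theta>) / Im lam"
    have tbig: "t > T0"
    proof (cases "Im lam > 0")
      case True
      have "T0 * Im lam + \<bar>\<theta>\<bar> < 2*pi*real N" using N True by (simp add: field_simps)
      then have "T0 * Im lam < 2*pi*real N - \<theta>" by linarith
      then show ?thesis using True unfolding t_def k_def by (simp add: field_simps)
    next
      case False
      then have bn: "Im lam < 0" using b by simp
      have "T0 * (- Im lam) + \<bar>\<theta>\<bar> < 2*pi*real N" using N bn by (simp add: field_simps)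
      then have "T0 * (- Im lam) < 2*pi*real N + \<theta>" by linarith
      then have "T0 < (2*pi*real N + \<theta>) / (- Im lam)" using bn by (simp add: field_simps)
      also have "(2*pi*real N + \<theta>) / (- Im lam) = t" unfolding t_def k_def using False b
        by (simp add: field_simps)
      finally show ?thesis .
    qed
    have tpos: "t > 0" using tbig unfolding T0_def by simp
    define r where "r = exp (- Re lam * t) * cmod z"
    have rpos: "r > 0" unfolding r_def using z by simp
    have rsmall: "r < e"
    proof -
      have "ln (cmod z / e) / Re lam < t" using tbig unfolding T0_def by simp
      then have "ln (cmod z / e) < Re lam * t" using a by (simp add: field_simps)
      then have "cmod z / e < exp (Re lam * t)" 
      proof -
        have pz: "cmod z / e > 0" using z e by simp
        show ?thesis using \<open>ln (cmod z / e) < Re lam * t\<close> exp_less_mono exp_ln[OF pz] by metis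
      qed
      then have "cmod z < e * exp (Re lam * t)" using e by (simp add: field_simps)
      then show ?thesis unfolding r_def using e by (simp add: exp_minus field_simps)
    qed
    have cisb: "cis (- (Im lam * t)) = u"
    proof -
      have "Im lam * t = 2*pi*k - \<theta>" unfolding t_def using b by simp
      then have "- (Im lam * t) = \<theta> + (- (2*pi*k))" by simp
      moreover have "cis (- (2*pi*k)) = 1"
      proof -
        have "- k \<in> \<int>" unfolding k_def by auto
        then show ?thesis using cis_multiple_2pi[of "- k"] by simp
      qed
      ultimately have "cis (- (Im lam * t)) = cis \<theta> * cis (- (2*pi*k))"
        by (subst cis_mult) (simp only:)
      then show ?thesis using cth \<open>cis (- (2*pi*k)) = 1\<close> by simp
    qed
    define p where "p = exp (- lam * complex_of_real t) * z"
    have pS: "p \<in> S" unfolding p_def using spiral[OF tpos] .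
    have p_eq: "p = complex_of_real r * sgn w"
    proof -
      have "p = complex_of_real (exp (- Re lam * t)) * u * z"
      proof -
        have "exp (- lam * complex_of_real t) = of_real (exp (Re (- lam * of_real t))) * cis (Im (- lam * of_real t))"
          by (rule exp_eq_polar)
        then show ?thesis using cisb unfolding p_def by simp
      qed
      also have "\<dots> = complex_of_real (exp (- Re lam * t)) * sgn w * (z / sgn z)"
        unfolding u_def by simp
      also have "z / sgn z = complex_of_real (cmod z)" using z by (simp add: sgn_eq)
      finally show ?thesis unfolding r_def by simp
    qed
    define n where "n = nat \<lfloor>cmod w / r\<rfloor>"
    have fl: "real n * r \<le> cmod w" "cmod w < real n * r + r"
    proof -
      have q0: "cmod w / r \<ge> 0" using rpos by simp
      have "real n = of_int \<lfloor>cmod w / r\<rfloor>" unfolding n_def using q0 by simp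
      then have "real n \<le> cmod w / r" "cmod w / r < real n + 1" by linarith+
      then show "real n * r \<le> cmod w" "cmod w < real n * r + r" using rpos by (simp_all add: field_simps)
    qed
    have "w - of_nat n * p = complex_of_real (cmod w - real n * r) * sgn w"
    proof -
      have "w = complex_of_real (cmod w) * sgn w" by (cases "w = 0") (simp_all add: sgn_eq)
      then show ?thesis unfolding p_eq by (simp add: algebra_simps)
    qed
    then have "cmod (w - of_nat n * p) = \<bar>cmod w - real n * r\<bar>"
      using w by (simp only: norm_mult norm_of_real) (simp add: norm_sgn)
    then have "dist (of_nat n * p) w = \<bar>cmod w - real n * r\<bar>"
      by (simp add: dist_norm norm_minus_commute)
    also have "\<dots> < e" using fl rsmall by simp
    finally show "\<exists>y\<in>S. dist y w < e" using mult[OF pS] by blast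
  qed
  then show ?thesis using cl by (simp add: closure_closed)
qed


lemma exp_neg_lim:
  assumes a: "(a::real) > 0"
  shows "((\<lambda>t::real. exp (- a * t)) \<longlongrightarrow> 0) at_top"
proof -
  have "filterlim (\<lambda>t::real. (- a) * t) at_bot at_top"
    by (rule filterlim_tendsto_neg_mult_at_bot[OF tendsto_const]) (use a in \<open>auto simp: filterlim_ident\<close>)
  then show ?thesis by (rule filterlim_compose[OF exp_at_bot])
qed

theorem lemma7p1:
  fixes m :: nat and lam :: complex and \<mu> :: "complex measure" and z :: complex
  assumes m: "m \<ge> 2"
    and lam1: "lam \<noteq> 1" and lampos: "Re lam > 0"
    and prob: "prob_space \<mu>" and sets: "sets \<mu> = sets borel"
    and integ: "integrable \<mu> (\<lambda>x. x)"
    and mean: "(\<integral>x. x \<partial>\<mu>) \<noteq> 0"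
    and fixpt: "\<mu> = distr (T_law m \<Otimes>\<^sub>M PiM {..<m} (\<lambda>_. \<mu>)) borel
                     (\<lambda>(t, zs). exp (- lam * complex_of_real t) * (\<Sum>i<m. zs i))"
    and zs: "z \<in> supp_law \<mu>"
  shows "ball 0 (cmod z) \<subseteq> supp_law \<mu>"
proof -
  define S where "S = supp_law \<mu>"
  interpret mu: prob_space \<mu> by (rule prob)
  have cl: "closed S" unfolding S_def by (rule supp_closed) (use mu.finite_measure_axioms sets in auto)
  have step: "exp (- lam * complex_of_real t) * (\<Sum>i<m. s i) \<in> S" if "t > 0" "\<forall>i<m. s i \<in> S" for t s
    using supp_step[OF m lampos prob sets fixpt] that unfolding S_def by blast
  have im: "Im lam \<noteq> 0"
  proof
    assume im0: "Im lam = 0"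
    define l where "l = Re lam"
    have l0: "l > 0" using lampos unfolding l_def .
    have lam_eq: "lam = complex_of_real l" by (simp add: complex_eq_iff im0 l_def)
    have l1: "l \<noteq> 1" using lam1 lam_eq by auto
    have "(\<lambda>t. exp (- lam * complex_of_real t)) = (\<lambda>t. complex_of_real (exp (- l * t)))"
      by (rule ext) (simp add: lam_eq exp_of_real[symmetric])
    then have "(\<integral>t. exp (- lam * complex_of_real t) \<partial>T_law m) = complex_of_real (\<integral>t. exp (- l * t) \<partial>T_law m)"
      by simp
    then have "complex_of_real (\<Prod>j\<in>{1..<m}. real j / (real j + l)) * of_nat m = 1"
      using mean_eq[OF m prob sets integ mean fixpt] T_exp[OF l0, of m] by simp
    then have "complex_of_real ((\<Prod>j\<in>{1..<m}. real j / (real j + l)) * real m) = 1"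
      by simp
    then have "(\<Prod>j\<in>{1..<m}. real j / (real j + l)) * real m = 1"
      using of_real_eq_1_iff by blast
    then show False using prod_ne[OF m l0 l1] by simp
  qed
  show ?thesis
  proof (cases "z = 0")
    case True then show ?thesis by simp
  next
    case zn: False
    have zS: "z \<in> S" using zs unfolding S_def .
    have z0: "0 \<in> S"
    proof (rule Lim_in_closed_set[OF cl])
      show "\<forall>\<^sub>F t in at_top. exp (- lam * complex_of_real t) * (\<Sum>i<m. z) \<in> S"
      proof (rule eventually_mono[OF eventually_gt_at_top[of "0::real"]])
        fix t :: real assume "0 < t"
        then show "exp (- lam * complex_of_real t) * (\<Sum>i<m. z) \<in> S"
          using step[of t "\<lambda>_. z"] zS by blast
      qed
      show "(at_top::real filter) \<noteq> bot" by simp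
      show "((\<lambda>t. exp (- lam * complex_of_real t) * (\<Sum>i<m. z)) \<longlongrightarrow> 0) at_top"
      proof (rule tendsto_norm_zero_cancel)
        have "((\<lambda>t. exp (- Re lam * t) * cmod (\<Sum>i<m. z)) \<longlongrightarrow> 0 * cmod (\<Sum>i<m. z)) at_top"
          by (intro tendsto_mult exp_neg_lim[OF lampos] tendsto_const)
        then show "((\<lambda>t. norm (exp (- lam * complex_of_real t) * (\<Sum>i<m. z))) \<longlongrightarrow> 0) at_top"
          by (simp add: norm_mult norm_exp_eq_Re)
      qed
    qed
    have add: "x + y \<in> S" if xy: "x \<in> S" "y \<in> S" for x y
    proof -
      define s where "s = (\<lambda>i::nat. (if i = 0 then x else 0) + (if i = 1 then y else 0))"
      have sS: "\<forall>i<m. s i \<in> S" using xy z0 unfolding s_def by auto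
      have ssum: "(\<Sum>i<m. s i) = x + y" using m unfolding s_def by (simp add: sum.distrib)
      show ?thesis
      proof (rule Lim_in_closed_set[OF cl])
        show "\<forall>\<^sub>F t in at_right 0. exp (- lam * complex_of_real t) * (x + y) \<in> S"
          using eventually_at_right_less[of "0::real"] by eventually_elim (use step sS ssum in metis)
        show "(at_right (0::real)) \<noteq> bot" by simp
        have "((\<lambda>t. exp (- lam * complex_of_real t) * (x + y)) \<longlongrightarrow> exp (- lam * complex_of_real 0) * (x + y)) (at_right 0)"
          by (intro tendsto_intros)
        then show "((\<lambda>t. exp (- lam * complex_of_real t) * (x + y)) \<longlongrightarrow> x + y) (at_right 0)" by simp
      qed
    qed
    have spiral: "exp (- lam * complex_of_real t) * z \<in> S" if "t > 0" for t
    proof -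
      have "exp (- lam * complex_of_real t) * (\<Sum>i<m. if i = 0 then z else 0) \<in> S"
        by (rule step[OF that]) (use zS z0 in auto)
      then show ?thesis using m by simp
    qed
    have "w \<in> S" for w by (rule geo[OF cl z0 add spiral lampos im zn]) auto
    then show ?thesis unfolding S_def by auto
  qed
qed


end
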